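(* Under the setting described in the context, there is a constant $C>0$ (independent of $x$ and $h$) such that for every $x\in\Omega$, every $0<h<1$ and each $j\in\{0,1\}$, $$\int_{\Omega}\left|\frac{x-t}{h}\right|^j \psi_h(x-t)\,d\mu(t)\le C.$$
   Context: Let $d\ge 1$ and let $\Omega\subset\mathbb{R}^d$ be a compact convex domain with Lipschitz boundary. Let $\mu$ be a probability measure on $\Omega$ such that: (1) there is a constant $C_1>0$, depending only on $\mu$ and $d$, with $\mu(\Omega\cap B(x,\alpha))\ge C_1\, m(B(x,\alpha))$ for all $x\in\Omega$ and $0<\alpha\le 1$, where $B(x,\alpha)$ is the Euclidean ball of radius $\alpha$ centered at $x$ and $m$ is Lebesgue measure; (2) $\mu$ extends to a finite positive measure $\mu^*$ on $\mathbb{R}^d$ whose Fourier transform $\widehat{\mu^*}(\xi)=\int_{\mathbb{R}^d}e^{-i t\cdot\xi}\,d\mu^*(t)$ belongs to $L^1(\mathbb{R}^d)$. Let $\psi\in C(\mathbb{R}^d)$ be nonnegative with $\int_{\mathbb{R}^d}\psi(x)\,dx=1$, $\int_{\mathbb{R}^d}|x|\psi(x)\,dx<\infty$, and $\psi(x)\ge C_\psi$ for all $|x|\le 1$, for some constant $C_\psi>0$. For $h>0$ set $\psi_h(x)=h^{-d}\psi(x/h)$. *)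

theory Defs
  imports "HOL-Probability.Probability"
begin

definition fourier_measure :: "'a::euclidean_space measure \<Rightarrow> 'a \<Rightarrow> complex" where
  "fourier_measure M \<xi> = (LINT t|M. cis (- (t \<bullet> \<xi>)))"

definition kernel_scale :: "('a::euclidean_space \<Rightarrow> real) \<Rightarrow> real \<Rightarrow> 'a \<Rightarrow> real" where
  "kernel_scale \<psi> h x = (1 / h) ^ DIM('a) * \<psi> ((1 / h) *\<^sub>R x)"

end

theory Submission
  imports Defs
begin
lemma gauss1_int:
  fixes s w :: real assumes s: "s > 0"
  shows "integrable lborel (\<lambda>\<xi>. complex_of_real (exp (-(s^2*\<xi>^2)/2)) * cis (w*\<xi>))"
proof -
  have "integrable lborel (\<lambda>x. std_normal_density x * \<bar>x\<bar>^0)"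
    by (rule integrable_std_normal_moment_abs)
  then have "integrable lborel std_normal_density" by simp
  then have "integrable lborel (\<lambda>x. std_normal_density (0 + s * x))"
    using s by (intro lborel_integrable_real_affine) auto
  then have i: "integrable lborel (\<lambda>x. sqrt (2*pi) * std_normal_density (s * x))"
    by simp
  show ?thesis
  proof (rule Bochner_Integration.integrable_bound[OF i])
    show "AE x in lborel. norm (complex_of_real (exp (-(s^2*x^2)/2)) * cis (w*x)) \<le> norm (sqrt (2*pi) * std_normal_density (s * x))"
      by (auto simp: std_normal_density_def norm_mult power_mult_distrib)
  qed (simp, intro borel_measurable_continuous_onI continuous_intros; simp)
qed

lemma gauss1:
  fixes s w :: real assumes s: "s > 0"
  shows "(\<integral>\<xi>. complex_of_real (exp (-(s^2*\<xi>^2)/2)) * cis (w*\<xi>) \<partial>lborel)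
     = complex_of_real (sqrt (2*pi) / s * exp (-(w^2) / (2* s^2)))"
proof -
  have "char std_normal_distribution (w/s) = complex_of_real (exp (- ((w/s)^2) / 2))"
    by (simp add: char_std_normal_distribution)
  moreover have "char std_normal_distribution (w/s) = (\<integral>x. std_normal_density x *\<^sub>R iexp (w/s*x) \<partial>lborel)"
    unfolding char_def by (subst integral_density) (auto simp: normal_density_nonneg)
  moreover have "(\<integral>x. std_normal_density x *\<^sub>R iexp (w/s*x) \<partial>lborel)
      = \<bar>s\<bar> *\<^sub>R (\<integral>x. std_normal_density (0 + s*x) *\<^sub>R iexp (w/s*(0 + s*x)) \<partial>lborel)"
    using s by (intro lborel_integral_real_affine) auto
  moreover have "(\<lambda>x. std_normal_density (0 + s*x) *\<^sub>R iexp (w/s*(0 + s*x)))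
     = (\<lambda>x. (1 / sqrt (2*pi)) *\<^sub>R (complex_of_real (exp (-(s^2*x^2)/2)) * cis (w*x)))"
    using s by (auto simp: fun_eq_iff std_normal_density_def cis_conv_exp power_mult_distrib scaleR_conv_of_real)
  ultimately have "complex_of_real (exp (- ((w/s)^2) / 2)) = s *\<^sub>R ((1 / sqrt (2*pi)) *\<^sub>R 
      (\<integral>\<xi>. complex_of_real (exp (-(s^2*\<xi>^2)/2)) * cis (w*\<xi>) \<partial>lborel))"
    using s by simp
  then show ?thesis using s
    by (simp add: scaleR_conv_of_real field_simps power_divide power2_eq_square)
qed
lemma lborel_prod_facts:
  fixes f :: "'a::euclidean_space \<Rightarrow> real \<Rightarrow> complex"
  assumes int: "\<And>b. b \<in> Basis \<Longrightarrow> integrable lborel (f b)"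
  shows "integrable lborel (\<lambda>x::'a. \<Prod>b\<in>Basis. f b (x \<bullet> b))"
    and "(\<integral>x. (\<Prod>b\<in>Basis. f b (x \<bullet> b)) \<partial>lborel) = (\<Prod>b\<in>Basis. integral\<^sup>L lborel (f b))"
proof -
  interpret P: product_sigma_finite "\<lambda>_::'a. lborel :: real measure"
    by (simp add: product_sigma_finite_def lborel.sigma_finite_measure_axioms)
  have meas[measurable]: "\<And>b. b \<in> Basis \<Longrightarrow> f b \<in> borel_measurable borel"
    using int by (simp add: borel_measurable_integrable)
  have T: "(\<lambda>g. \<Sum>b\<in>Basis. g b *\<^sub>R b) \<in> measurable (\<Pi>\<^sub>M b\<in>Basis. lborel) (borel :: 'a measure)"
    by measurable
  have eq: "\<And>g. (\<Prod>b\<in>Basis. f b ((\<Sum>c\<in>Basis. g c *\<^sub>R c) \<bullet> b)) = (\<Prod>b\<in>Basis. f b (g b))"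
    by (intro prod.cong refl) (simp add: inner_sum_left inner_Basis if_distrib cong: if_cong)
  have m2: "(\<lambda>x::'a. \<Prod>b\<in>Basis. f b (x \<bullet> b)) \<in> borel_measurable borel"
    by measurable
  have i1: "integrable (\<Pi>\<^sub>M b\<in>Basis. lborel) (\<lambda>g. \<Prod>b\<in>Basis. f b (g b))"
    by (intro P.product_integrable_prod int) auto
  show "integrable lborel (\<lambda>x::'a. \<Prod>b\<in>Basis. f b (x \<bullet> b))"
    apply (subst lborel_eq)
    apply (subst integrable_distr_eq[OF T m2])
    using i1 by (simp add: eq)
  show "(\<integral>x. (\<Prod>b\<in>Basis. f b (x \<bullet> b)) \<partial>lborel) = (\<Prod>b\<in>Basis. integral\<^sup>L lborel (f b))"
    apply (subst lborel_eq)
    apply (subst integral_distr[OF T m2])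
    apply (simp add: eq)
    by (intro P.product_integral_prod int) auto
qed

lemma cis_sum_lemma: "finite A \<Longrightarrow> cis (\<Sum>i\<in>A. g i) = (\<Prod>i\<in>A. cis (g i))"
  by (induction A rule: finite_induct) (auto simp: cis_mult[symmetric])

lemma gaussd:
  fixes y :: "'a::euclidean_space" and s :: real
  assumes s: "s > 0"
  shows "integrable lborel (\<lambda>\<xi>::'a. complex_of_real (exp (-(s^2 * (norm \<xi>)^2)/2)) * cis (y \<bullet> \<xi>))"
    and "(\<integral>\<xi>. complex_of_real (exp (-(s^2 * (norm \<xi>)^2)/2)) * cis (y \<bullet> \<xi>) \<partial>lborel)
        = complex_of_real ((sqrt (2*pi) / s)^DIM('a) * exp (-((norm y)^2) / (2 * s^2)))"
proof -
  define f where "f b x = complex_of_real (exp (-(s^2 * x^2)/2)) * cis ((y \<bullet> b) * x)" for b :: 'a and x :: real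
  have eq: "(\<lambda>\<xi>::'a. complex_of_real (exp (-(s^2 * (norm \<xi>)^2)/2)) * cis (y \<bullet> \<xi>))
      = (\<lambda>\<xi>. \<Prod>b\<in>Basis. f b (\<xi> \<bullet> b))"
  proof
    fix \<xi> :: 'a
    have n: "(norm \<xi>)^2 = (\<Sum>b\<in>Basis. (\<xi> \<bullet> b)^2)"
      unfolding power2_norm_eq_inner by (subst euclidean_inner) (simp add: power2_eq_square)
    have i: "y \<bullet> \<xi> = (\<Sum>b\<in>Basis. (y \<bullet> b) * (\<xi> \<bullet> b))"
      by (simp add: euclidean_inner[of y \<xi>])
    have "exp (-(s^2 * (norm \<xi>)^2)/2) = exp (\<Sum>b\<in>Basis. -(s^2 * (\<xi> \<bullet> b)^2)/2)"
      by (simp add: n sum_distrib_left sum_divide_distrib sum_negf)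
    also have "\<dots> = (\<Prod>b\<in>Basis. exp (-(s^2 * (\<xi> \<bullet> b)^2)/2))"
      by (simp add: exp_sum)
    finally have e: "exp (-(s^2 * (norm \<xi>)^2)/2) = (\<Prod>b\<in>Basis. exp (-(s^2 * (\<xi> \<bullet> b)^2)/2))" .
    show "complex_of_real (exp (-(s^2 * (norm \<xi>)^2)/2)) * cis (y \<bullet> \<xi>) = (\<Prod>b\<in>Basis. f b (\<xi> \<bullet> b))"
      unfolding f_def prod.distrib e i of_real_prod cis_sum_lemma[OF finite_Basis] by simp
  qed
  have int: "\<And>b. b \<in> Basis \<Longrightarrow> integrable lborel (f b)"
    unfolding f_def using gauss1_int[OF s] by blast
  show "integrable lborel (\<lambda>\<xi>::'a. complex_of_real (exp (-(s^2 * (norm \<xi>)^2)/2)) * cis (y \<bullet> \<xi>))"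
    unfolding eq by (rule lborel_prod_facts(1)[OF int])
  have "(\<integral>\<xi>. complex_of_real (exp (-(s^2 * (norm \<xi>)^2)/2)) * cis (y \<bullet> \<xi>) \<partial>lborel)
     = (\<Prod>b\<in>Basis. integral\<^sup>L lborel (f b))"
    unfolding eq by (rule lborel_prod_facts(2)[OF int])
  also have "\<dots> = (\<Prod>b\<in>(Basis::'a set). complex_of_real (sqrt (2*pi) / s * exp (-((y \<bullet> b)^2) / (2 * s^2))))"
    unfolding f_def using gauss1[OF s] by (intro prod.cong) auto
  also have "\<dots> = complex_of_real ((sqrt (2*pi) / s)^DIM('a) * exp (-((norm y)^2) / (2 * s^2)))"
  proof -
    have n: "(norm y)^2 = (\<Sum>b\<in>Basis. (y \<bullet> b)^2)"
      unfolding power2_norm_eq_inner by (subst euclidean_inner) (simp add: power2_eq_square)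
    have "exp (-((norm y)^2) / (2 * s^2)) = (\<Prod>b\<in>(Basis::'a set). exp (-((y \<bullet> b)^2) / (2 * s^2)))"
      by (simp add: n exp_sum[symmetric] sum_divide_distrib sum_negf)
    then have "(\<Prod>b\<in>(Basis::'a set). sqrt (2*pi) / s * exp (-((y \<bullet> b)^2) / (2 * s^2)))
       = (sqrt (2*pi) / s)^DIM('a) * exp (-((norm y)^2) / (2 * s^2))"
      by (simp only: prod.distrib prod_constant)
    then show ?thesis
      by (simp only: of_real_prod[symmetric])
  qed
  finally show "(\<integral>\<xi>. complex_of_real (exp (-(s^2 * (norm \<xi>)^2)/2)) * cis (y \<bullet> \<xi>) \<partial>lborel)
        = complex_of_real ((sqrt (2*pi) / s)^DIM('a) * exp (-((norm y)^2) / (2 * s^2)))" .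
qed

definition gk :: "real \<Rightarrow> 'a::euclidean_space \<Rightarrow> real" where
  "gk s y = (1/(2*pi))^DIM('a) * ((sqrt (2*pi) / s)^DIM('a) * exp (-((norm y)^2) / (2 * s^2)))"

lemma gk_nonneg: "s > 0 \<Longrightarrow> gk s y \<ge> 0"
  by (simp add: gk_def)

lemma gk_cont: "continuous_on UNIV (gk s)"
  unfolding gk_def divide_inverse by (intro continuous_intros)

lemma gk_meas[measurable]: "gk s \<in> borel_measurable borel"
  by (intro borel_measurable_continuous_onI gk_cont)

lemma gk_bound: "s > 0 \<Longrightarrow> gk s y \<le> (1/(2*pi))^DIM('a) * (sqrt (2*pi) / s)^DIM('a)"
  for y :: "'a::euclidean_space"
  unfolding gk_def by (intro mult_left_mono) auto

lemma gk_sym: "gk s (x - t) = gk s (t - x)"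
  by (simp add: gk_def norm_minus_commute)

lemma conv_bound:
  fixes M :: "'a::euclidean_space measure" and x :: 'a and s :: real
  assumes fin: "finite_measure M" and sets: "sets M = sets borel"
    and four: "integrable lborel (fourier_measure M)"
    and s: "s > 0"
  shows "(\<integral>\<^sup>+ t. ennreal (gk s (x - t)) \<partial>M)
     \<le> ennreal ((1/(2*pi))^DIM('a) * (\<integral>\<xi>. norm (fourier_measure M \<xi>) \<partial>lborel))"
proof -
  interpret finite_measure M by fact
  interpret pair_sigma_finite M "lborel :: 'a measure"
    by (simp add: pair_sigma_finite_def lborel.sigma_finite_measure_axioms sigma_finite_measure_axioms)
  define c where "c = (1/(2*pi))^DIM('a)"
  have c: "c \<ge> 0" by (simp add: c_def)
  define G where "G \<xi> = exp (-(s^2 * (norm \<xi>)^2)/2)" for \<xi> :: 'a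
  define \<Phi> where "\<Phi> t \<xi> = complex_of_real (G \<xi>) * cis ((x - t) \<bullet> \<xi>)" for t \<xi> :: 'a
  have G01: "0 \<le> G \<xi>" "G \<xi> \<le> 1" for \<xi> by (auto simp: G_def)
  have Gint: "integrable lborel G"
  proof -
    have "integrable lborel (\<lambda>\<xi>::'a. complex_of_real (G \<xi>) * cis (0 \<bullet> \<xi>))"
      unfolding G_def using gaussd(1)[OF s, of 0] by simp
    from integrable_Re[OF this] show ?thesis by simp
  qed
  have Phi_int: "integrable lborel (\<Phi> t)" for t
    unfolding \<Phi>_def G_def using gaussd(1)[OF s] by blast
  have Phi_eq: "gk s (x - t) = c * Re (\<integral>\<xi>. \<Phi> t \<xi> \<partial>lborel)" for t
    unfolding \<Phi>_def G_def gaussd(2)[OF s] gk_def c_def by simp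
  have measM: "measurable M = measurable borel"
    using sets by (intro ext measurable_cong_sets) auto
  have setsP: "sets (M \<Otimes>\<^sub>M lborel) = sets (borel :: ('a \<times> 'a) measure)"
    using sets by (simp add: borel_prod[symmetric] cong: sets_pair_measure_cong)
  have "(\<lambda>p. \<Phi> (fst p) (snd p)) \<in> borel_measurable borel"
    unfolding \<Phi>_def G_def
    by (intro borel_measurable_continuous_onI continuous_intros; simp)
  then have Phi_meas: "(\<lambda>p. \<Phi> (fst p) (snd p)) \<in> borel_measurable (M \<Otimes>\<^sub>M lborel)"
    using measurable_cong_sets[OF setsP refl] by blast
  have Phi_int2: "integrable (M \<Otimes>\<^sub>M lborel) (case_prod \<Phi>)"
  proof (rule Fubini_integrable)
    show "case_prod \<Phi> \<in> borel_measurable (M \<Otimes>\<^sub>M lborel)"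
      using Phi_meas by (simp add: case_prod_beta')
    have "(\<lambda>t. \<integral>\<xi>. norm (\<Phi> t \<xi>) \<partial>lborel) = (\<lambda>t. \<integral>\<xi>. G \<xi> \<partial>lborel)"
      using G01 by (simp add: \<Phi>_def norm_mult)
    then show "integrable M (\<lambda>t. \<integral>\<xi>. norm (case_prod \<Phi> (t, \<xi>)) \<partial>lborel)"
      by simp
    show "AE t in M. integrable lborel (\<lambda>\<xi>. case_prod \<Phi> (t, \<xi>))"
      using Phi_int by simp
  qed
  have gkint: "integrable M (\<lambda>t. gk s (x - t))"
    by (rule integrable_const_bound[where B="(1/(2*pi))^DIM('a) * (sqrt (2*pi) / s)^DIM('a)"])
       (use s gk_bound[OF s, of "x - t" for t] gk_nonneg[OF s, of "x - t" for t] in \<open>auto simp: measM\<close>)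
  have "(\<integral>\<^sup>+ t. ennreal (gk s (x - t)) \<partial>M) = ennreal (\<integral>t. gk s (x - t) \<partial>M)"
    using gkint gk_nonneg[OF s] by (intro nn_integral_eq_integral) auto
  also have "(\<integral>t. gk s (x - t) \<partial>M) = c * Re (\<integral>t. (\<integral>\<xi>. \<Phi> t \<xi> \<partial>lborel) \<partial>M)"
  proof -
    have intf: "integrable M (\<lambda>t. \<integral>\<xi>. \<Phi> t \<xi> \<partial>lborel)"
      using integrable_fst'[OF Phi_int2] by (simp add: case_prod_beta')
    show ?thesis
      by (simp only: Phi_eq integral_mult_right_zero integral_Re[OF intf])
  qed
  also have "(\<integral>t. (\<integral>\<xi>. \<Phi> t \<xi> \<partial>lborel) \<partial>M) = (\<integral>\<xi>. (\<integral>t. \<Phi> t \<xi> \<partial>M) \<partial>lborel)"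
    using Fubini_integral[OF Phi_int2] by simp
  also have "\<dots> = (\<integral>\<xi>. complex_of_real (G \<xi>) * cis (x \<bullet> \<xi>) * fourier_measure M \<xi> \<partial>lborel)"
  proof (intro Bochner_Integration.integral_cong refl)
    fix \<xi> :: 'a
    have e: "\<Phi> t \<xi> = (complex_of_real (G \<xi>) * cis (x \<bullet> \<xi>)) * cis (- (t \<bullet> \<xi>))" for t
    proof -
      have "cis (x \<bullet> \<xi>) * cis (- (t \<bullet> \<xi>)) = cis ((x - t) \<bullet> \<xi>)"
        by (simp add: cis_mult inner_diff_left)
      then show ?thesis unfolding \<Phi>_def by (simp only: mult.assoc)
    qed
    show "(\<integral>t. \<Phi> t \<xi> \<partial>M) = complex_of_real (G \<xi>) * cis (x \<bullet> \<xi>) * fourier_measure M \<xi>"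
      unfolding e fourier_measure_def by (rule integral_mult_right_zero)
  qed
  also have "c * Re \<dots> \<le> c * (\<integral>\<xi>. norm (fourier_measure M \<xi>) \<partial>lborel)"
  proof (rule mult_left_mono[OF _ c])
    let ?H = "\<lambda>\<xi>. complex_of_real (G \<xi>) * cis (x \<bullet> \<xi>) * fourier_measure M \<xi>"
    have fm: "fourier_measure M \<in> borel_measurable lborel"
      using four by (rule borel_measurable_integrable)
    have Hm: "?H \<in> borel_measurable lborel"
    proof -
      have "(\<lambda>\<xi>. complex_of_real (G \<xi>) * cis (x \<bullet> \<xi>)) \<in> borel_measurable borel"
        unfolding G_def by (intro borel_measurable_continuous_onI continuous_intros; simp)
      then have "(\<lambda>\<xi>. complex_of_real (G \<xi>) * cis (x \<bullet> \<xi>)) \<in> borel_measurable lborel"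
        by simp
      from borel_measurable_times[OF this fm] show ?thesis by simp
    qed
    have nH: "norm (?H \<xi>) \<le> norm (fourier_measure M \<xi>)" for \<xi>
      using G01[of \<xi>] by (simp add: norm_mult mult_left_le_one_le)
    have Hi: "integrable lborel (\<lambda>\<xi>. norm (?H \<xi>))"
      by (rule Bochner_Integration.integrable_bound[OF integrable_norm[OF four]])
         (use Hm nH in auto)
    have "Re (integral\<^sup>L lborel ?H) \<le> norm (integral\<^sup>L lborel ?H)"
      by (rule complex_Re_le_cmod)
    also have "\<dots> \<le> (\<integral>\<xi>. norm (?H \<xi>) \<partial>lborel)"
      by (rule integral_norm_bound)
    also have "\<dots> \<le> (\<integral>\<xi>. norm (fourier_measure M \<xi>) \<partial>lborel)"
      by (intro integral_mono Hi integrable_norm[OF four] nH)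
    finally show "Re (integral\<^sup>L lborel ?H) \<le> (\<integral>\<xi>. norm (fourier_measure M \<xi>) \<partial>lborel)" .
  qed
  finally show ?thesis unfolding c_def by (simp add: ennreal_leI)
qed

lemma nn_integral_affine_euclid:
  fixes f :: "'a::euclidean_space \<Rightarrow> ennreal" and c :: real
  assumes [measurable]: "f \<in> borel_measurable borel" and c: "c \<noteq> 0"
  shows "(\<integral>\<^sup>+x. f x \<partial>lborel) = ennreal (\<bar>c\<bar>^DIM('a)) * (\<integral>\<^sup>+x. f (t + c *\<^sub>R x) \<partial>lborel)"
  by (subst lborel_affine[OF c, of t])
     (simp add: nn_integral_density nn_integral_distr nn_integral_cmult)

lemma gk_mass: "(\<integral>\<^sup>+w. ennreal (gk 1 (w::'a::euclidean_space)) \<partial>lborel) = 1"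
proof -
  have i: "integrable lborel (\<lambda>\<xi>::'a. complex_of_real (exp (-(1^2 * (norm \<xi>)^2)/2)) * cis (0 \<bullet> \<xi>))"
    using gaussd(1)[of 1 "0::'a"] by simp
  have v: "(\<integral>\<xi>. complex_of_real (exp (-(1^2 * (norm (\<xi>::'a))^2)/2)) * cis (0 \<bullet> \<xi>) \<partial>lborel)
        = complex_of_real ((sqrt (2*pi) / 1)^DIM('a) * exp (-((norm (0::'a))^2) / (2 * 1^2)))"
    using gaussd(2)[of 1 "0::'a"] by simp
  have i2: "integrable lborel (\<lambda>\<xi>::'a. exp (-((norm \<xi>)^2)/2))"
    using integrable_Re[OF i] by simp
  have v2: "(\<integral>\<xi>. exp (-((norm (\<xi>::'a))^2)/2) \<partial>lborel) = sqrt (2*pi)^DIM('a)"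
    using arg_cong[OF v, of Re] by simp
  have eqg: "gk 1 w = (1/(2*pi))^DIM('a) * sqrt (2*pi)^DIM('a) * exp (-((norm w)^2)/2)" for w :: 'a
    by (simp add: gk_def)
  have "(\<integral>w. gk 1 (w::'a) \<partial>lborel) = (1/(2*pi))^DIM('a) * sqrt (2*pi)^DIM('a) * sqrt (2*pi)^DIM('a)"
    unfolding eqg[abs_def] using v2 by simp
  also have "\<dots> = 1"
  proof -
    have a: "sqrt (2*pi)^DIM('a) * sqrt (2*pi)^DIM('a) = (2*pi)^DIM('a)"
      by (subst power_mult_distrib[symmetric]) simp
    have b: "(1/(2*pi))^DIM('a) * (2*pi)^DIM('a) = (1::real)"
      by (subst power_mult_distrib[symmetric]) simp
    show ?thesis by (simp only: mult.assoc a b)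
  qed
  finally have "(\<integral>w. gk 1 (w::'a) \<partial>lborel) = 1" .
  moreover have "integrable lborel (gk 1 :: 'a \<Rightarrow> real)"
    unfolding eqg[abs_def] using i2 by simp
  ultimately show ?thesis
    using gk_nonneg[of 1] by (subst nn_integral_eq_integral) auto
qed

lemma gk_scale: "s > 0 \<Longrightarrow> s^DIM('a) * gk s (s *\<^sub>R w) = gk 1 (w::'a::euclidean_space)"
proof -
  assume s: "s > 0"
  have e: "-((norm (s *\<^sub>R w))^2) / (2 * s^2) = -((norm w)^2) / (2 * 1^2)"
    using s by (simp add: power_mult_distrib)
  have p: "s^DIM('a) * (sqrt (2*pi) / s)^DIM('a) = (sqrt (2*pi) / 1)^DIM('a)"
    using s by (subst power_mult_distrib[symmetric]) simp
  show ?thesis unfolding gk_def e using p by (simp only: mult.left_commute[of "s^DIM('a)"] mult.assoc[symmetric]) simp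
qed

lemma mass_tendsto:
  fixes r :: real assumes r: "r > 0"
  shows "(\<lambda>n. \<integral>\<^sup>+w. ennreal (gk 1 (w::'a::euclidean_space) * indicator (ball 0 (r * Suc n)) w) \<partial>lborel) \<longlonglongrightarrow> 1"
proof -
  have [measurable]: "\<And>R. ball (0::'a) R \<in> sets borel" by simp
  have "(\<lambda>n. \<integral>\<^sup>+w. ennreal (gk 1 (w::'a) * indicator (ball 0 (r * Suc n)) w) \<partial>lborel)
        \<longlonglongrightarrow> (\<integral>\<^sup>+w. ennreal (gk 1 (w::'a)) \<partial>lborel)"
  proof (rule nn_integral_LIMSEQ)
    show "incseq (\<lambda>n w. ennreal (gk 1 (w::'a) * indicator (ball 0 (r * Suc n)) w))"
    proof (intro incseq_SucI le_funI)
      fix n w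
      have "r * Suc n \<le> r * Suc (Suc n)" using r by (intro mult_left_mono) auto
      then have "indicator (ball 0 (r * Suc n)) w \<le> (indicator (ball (0::'a) (r * Suc (Suc n))) w :: real)"
        by (auto simp: indicator_def)
      then show "ennreal (gk 1 (w::'a) * indicator (ball 0 (r * Suc n)) w) \<le> ennreal (gk 1 w * indicator (ball 0 (r * Suc (Suc n))) w)"
        using gk_nonneg[of 1 w] by (intro ennreal_leI mult_left_mono) auto
    qed
    show "\<And>n. (\<lambda>w. ennreal (gk 1 (w::'a) * indicator (ball 0 (r * Suc n)) w)) \<in> borel_measurable lborel"
      by measurable
    fix w :: 'a
    obtain N where N: "norm w < r * Suc N"
    proof -
      obtain N :: nat where "norm w / r < N" using reals_Archimedean2 by blast
      then have "norm w < r * Suc N" using r by (simp add: field_simps)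
      then show ?thesis using that by blast
    qed
    have "eventually (\<lambda>n. ennreal (gk 1 w * indicator (ball 0 (r * Suc n)) w) = ennreal (gk 1 w)) sequentially"
    proof (rule eventually_sequentiallyI[of N])
      fix n assume "N \<le> n"
      then have "r * Suc N \<le> r * Suc n" using r by (intro mult_left_mono) auto
      then show "ennreal (gk 1 w * indicator (ball 0 (r * Suc n)) w) = ennreal (gk 1 w)"
        using N by (auto simp: indicator_def)
    qed
    then show "(\<lambda>n. ennreal (gk 1 w * indicator (ball 0 (r * Suc n)) w)) \<longlonglongrightarrow> ennreal (gk 1 w)"
      by (rule tendsto_eventually)
  qed
  then show ?thesis using gk_mass[where 'a='a] by simp
qed

lemma mass_sub:
  fixes r :: real and t :: "'a::euclidean_space"
  assumes r: "r > 0"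
  shows "(\<integral>\<^sup>+z. ennreal (gk (1 / Suc n) (t - z) * indicator (ball t r) z) \<partial>lborel)
       = (\<integral>\<^sup>+w. ennreal (gk 1 (w::'a) * indicator (ball 0 (r * Suc n)) w) \<partial>lborel)"
proof -
  define s :: real where "s = 1 / Suc n"
  have s: "s > 0" by (simp add: s_def)
  have [measurable]: "ball t r \<in> sets borel" by simp
  have "(\<integral>\<^sup>+z. ennreal (gk s (t - z) * indicator (ball t r) z) \<partial>lborel)
     = ennreal (\<bar>- s\<bar>^DIM('a)) * (\<integral>\<^sup>+w. ennreal (gk s (t - (t + (- s) *\<^sub>R w)) * indicator (ball t r) (t + (- s) *\<^sub>R w)) \<partial>lborel)"
    apply (rule nn_integral_affine_euclid)
     apply measurable
    using s by auto
  also have "\<dots> = (\<integral>\<^sup>+w. ennreal (s^DIM('a)) * ennreal (gk s (t - (t + (- s) *\<^sub>R w)) * indicator (ball t r) (t + (- s) *\<^sub>R w)) \<partial>lborel)"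
    using s by (subst nn_integral_cmult) auto
  also have "\<dots> = (\<integral>\<^sup>+w. ennreal (gk 1 (w::'a) * indicator (ball 0 (r * Suc n)) w) \<partial>lborel)"
  proof (intro nn_integral_cong)
    fix w :: 'a
    have i: "indicator (ball t r) (t + (- s) *\<^sub>R w) = (indicator (ball 0 (r * Suc n)) w :: real)"
    proof -
      have "dist t (t + (- s) *\<^sub>R w) = s * norm w" using s by (simp add: dist_norm)
      moreover have "s * norm w < r \<longleftrightarrow> norm w < r * Suc n"
        unfolding s_def by (simp add: field_simps)
      ultimately show ?thesis by (simp only: indicator_def mem_ball dist_0_norm)
    qed
    have g: "s^DIM('a) * gk s (t - (t + (- s) *\<^sub>R w)) = gk 1 w"
      using gk_scale[OF s, of w] by simp
    show "ennreal (s^DIM('a)) * ennreal (gk s (t - (t + (- s) *\<^sub>R w)) * indicator (ball t r) (t + (- s) *\<^sub>R w))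
        = ennreal (gk 1 w * indicator (ball 0 (r * Suc n)) w)"
      unfolding i using s gk_nonneg[OF s] g
      by (simp add: ennreal_mult'[symmetric] mult.assoc[symmetric])
  qed
  finally show ?thesis unfolding s_def .
qed

lemma pointwise_liminf:
  fixes F :: "'a::euclidean_space \<Rightarrow> real" and t :: 'a
  assumes Fc: "continuous_on UNIV F" and Fn: "\<And>x. 0 \<le> F x"
    and Fm[measurable]: "F \<in> borel_measurable borel"
  shows "ennreal (F t) \<le> liminf (\<lambda>n. \<integral>\<^sup>+y. ennreal (gk (1 / Suc n) (t - y) * F y) \<partial>lborel)"
  unfolding le_Liminf_iff
proof (intro allI impI)
  fix y assume y: "y < ennreal (F t)"
  obtain y0 where y0: "y = ennreal y0" "0 \<le> y0"
    using y by (cases y rule: ennreal_cases) auto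
  have y0F: "y0 < F t" using y y0 Fn[of t] by (simp add: ennreal_less_iff)
  define c where "c = (y0 + F t) / 2"
  have c: "y0 < c" "c < F t" "0 < c" using y0F y0 by (auto simp: c_def)
  obtain r where r: "r > 0" and rF: "\<And>z. dist z t < r \<Longrightarrow> dist (F z) (F t) < F t - c"
    using Fc c unfolding continuous_on_iff by (metis UNIV_I diff_gt_0_iff_gt)
  have Fz: "c < F z" if "z \<in> ball t r" for z
  proof -
    have "dist z t < r" using that by (simp add: dist_commute)
    then have "dist (F z) (F t) < F t - c" by (rule rF)
    then show ?thesis by (simp add: dist_real_def abs_less_iff)
  qed
  have [measurable]: "ball t r \<in> sets borel" by simp
  define m where "m n = (\<integral>\<^sup>+z. ennreal (gk (1 / Suc n) (t - z) * indicator (ball t r) z) \<partial>lborel)" for n :: nat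
  have low: "ennreal c * m n \<le> (\<integral>\<^sup>+y. ennreal (gk (1 / Suc n) (t - y) * F y) \<partial>lborel)" for n
  proof -
    have "ennreal c * m n = (\<integral>\<^sup>+z. ennreal c * ennreal (gk (1 / Suc n) (t - z) * indicator (ball t r) z) \<partial>lborel)"
      unfolding m_def by (rule nn_integral_cmult[symmetric]) measurable
    also have "\<dots> \<le> (\<integral>\<^sup>+y. ennreal (gk (1 / Suc n) (t - y) * F y) \<partial>lborel)"
    proof (intro nn_integral_mono)
      fix z
      have g: "0 \<le> gk (1 / Suc n) (t - z)" by (intro gk_nonneg) simp
      show "ennreal c * ennreal (gk (1 / Suc n) (t - z) * indicator (ball t r) z) \<le> ennreal (gk (1 / Suc n) (t - z) * F z)"
      proof (cases "z \<in> ball t r")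
        case True
        then have "c * gk (1 / Suc n) (t - z) \<le> gk (1 / Suc n) (t - z) * F z"
          using Fz[OF True] g c by (metis less_imp_le mult.commute mult_left_mono)
        then show ?thesis using True c g by (simp add: ennreal_mult'[symmetric] ennreal_leI)
      qed simp
    qed
    finally show ?thesis .
  qed
  have "m \<longlonglongrightarrow> 1"
    unfolding m_def mass_sub[OF r] by (rule mass_tendsto[OF r])
  then have "(\<lambda>n. ennreal c * m n) \<longlonglongrightarrow> ennreal c * 1"
    by (intro ennreal_tendsto_cmult) auto
  moreover have "y < ennreal c * 1" using y0 c by (simp add: ennreal_lessI)
  ultimately have "eventually (\<lambda>n. y < ennreal c * m n) sequentially"
    by (rule order_tendstoD(1))
  then show "eventually (\<lambda>n. y < (\<integral>\<^sup>+y. ennreal (gk (1 / Suc n) (t - y) * F y) \<partial>lborel)) sequentially"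
    by eventually_elim (use low in \<open>blast intro: less_le_trans\<close>)
qed

lemma main_ineq:
  fixes M :: "'a::euclidean_space measure" and F :: "'a \<Rightarrow> real"
  assumes fin: "finite_measure M" and sets: "sets M = sets borel"
    and four: "integrable lborel (fourier_measure M)"
    and Fc: "continuous_on UNIV F" and Fn: "\<And>x. 0 \<le> F x"
  shows "(\<integral>\<^sup>+t. ennreal (F t) \<partial>M)
    \<le> ennreal ((1/(2*pi))^DIM('a) * (\<integral>\<xi>. norm (fourier_measure M \<xi>) \<partial>lborel)) * (\<integral>\<^sup>+t. ennreal (F t) \<partial>lborel)"
proof -
  interpret finite_measure M by fact
  interpret pair_sigma_finite M "lborel :: 'a measure"
    by (simp add: pair_sigma_finite_def lborel.sigma_finite_measure_axioms sigma_finite_measure_axioms)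
  define K where "K = ennreal ((1/(2*pi))^DIM('a) * (\<integral>\<xi>. norm (fourier_measure M \<xi>) \<partial>lborel))"
  define Conv where "Conv n t = (\<integral>\<^sup>+y. ennreal (gk (1 / Suc n) (t - y) * F y) \<partial>lborel)" for n :: nat and t :: 'a
  have Fm[measurable]: "F \<in> borel_measurable borel" by (rule borel_measurable_continuous_onI[OF Fc])
  have setsP: "sets (M \<Otimes>\<^sub>M lborel) = sets (borel \<Otimes>\<^sub>M (borel :: 'a measure))"
    using sets by (simp cong: sets_pair_measure_cong)
  have jm: "(\<lambda>p. ennreal (gk (1 / Suc n) (fst p - snd p) * F (snd p))) \<in> borel_measurable (M \<Otimes>\<^sub>M lborel)" for n
  proof -
    have "(\<lambda>p. ennreal (gk (1 / Suc n) (fst p - snd p) * F (snd p))) \<in> borel_measurable (borel \<Otimes>\<^sub>M (borel :: 'a measure))"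
      by measurable
    then show ?thesis using measurable_cong_sets[OF setsP refl] by blast
  qed
  have bound: "(\<integral>\<^sup>+t. Conv n t \<partial>M) \<le> K * (\<integral>\<^sup>+t. ennreal (F t) \<partial>lborel)" for n
  proof -
    have "(\<integral>\<^sup>+t. Conv n t \<partial>M) = (\<integral>\<^sup>+y. (\<integral>\<^sup>+t. ennreal (gk (1 / Suc n) (t - y) * F y) \<partial>M) \<partial>lborel)"
      unfolding Conv_def
      by (rule Fubini'[symmetric]) (use jm[of n] in \<open>simp add: case_prod_beta'\<close>)
    also have "\<dots> \<le> (\<integral>\<^sup>+y. ennreal (F y) * K \<partial>lborel)"
    proof (intro nn_integral_mono)
      fix y :: 'a
      have "(\<integral>\<^sup>+t. ennreal (gk (1 / Suc n) (t - y) * F y) \<partial>M) = (\<integral>\<^sup>+t. ennreal (gk (1 / Suc n) (y - t)) * ennreal (F y) \<partial>M)"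
      proof (intro nn_integral_cong)
        fix t :: 'a
        have g: "0 \<le> gk (1 / Suc n) (y - t)" by (intro gk_nonneg) simp
        show "ennreal (gk (1 / Suc n) (t - y) * F y) = ennreal (gk (1 / Suc n) (y - t)) * ennreal (F y)"
          unfolding gk_sym[of _ t y] by (rule ennreal_mult[OF g Fn])
      qed
      also have "\<dots> = (\<integral>\<^sup>+t. ennreal (gk (1 / Suc n) (y - t)) \<partial>M) * ennreal (F y)"
      proof (rule nn_integral_multc)
        have "(\<lambda>t. ennreal (gk (1 / Suc n) (y - t))) \<in> borel_measurable borel" by measurable
        then show "(\<lambda>t. ennreal (gk (1 / Suc n) (y - t))) \<in> borel_measurable M"
          using measurable_cong_sets[OF sets refl] by blast
      qed
      also have "\<dots> \<le> K * ennreal (F y)"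
        unfolding K_def by (intro mult_right_mono conv_bound fin sets four) auto
      finally show "(\<integral>\<^sup>+t. ennreal (gk (1 / Suc n) (t - y) * F y) \<partial>M) \<le> ennreal (F y) * K"
        by (simp add: mult.commute)
    qed
    also have "\<dots> = K * (\<integral>\<^sup>+t. ennreal (F t) \<partial>lborel)"
      by (subst nn_integral_multc) (auto simp: mult.commute)
    finally show ?thesis .
  qed
  have Convm: "(\<lambda>t. Conv n t) \<in> borel_measurable M" for n
    unfolding Conv_def using lborel.borel_measurable_nn_integral_fst[OF jm[of n]] by simp
  have "(\<integral>\<^sup>+t. ennreal (F t) \<partial>M) \<le> (\<integral>\<^sup>+t. liminf (\<lambda>n. Conv n t) \<partial>M)"
    unfolding Conv_def by (intro nn_integral_mono pointwise_liminf Fc Fn Fm)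
  also have "\<dots> \<le> liminf (\<lambda>n. \<integral>\<^sup>+t. Conv n t \<partial>M)"
    by (rule nn_integral_liminf) (rule Convm)
  also have "\<dots> \<le> liminf (\<lambda>n. K * (\<integral>\<^sup>+t. ennreal (F t) \<partial>lborel))"
    by (intro Liminf_mono always_eventually allI bound)
  also have "\<dots> = K * (\<integral>\<^sup>+t. ennreal (F t) \<partial>lborel)"
    by (simp add: Liminf_const)
  finally show ?thesis unfolding K_def .
qed

theorem lemma2p1:
  fixes \<Omega> :: "'a::euclidean_space set"
    and \<mu> \<mu>s :: "'a measure"
    and \<psi> :: "'a \<Rightarrow> real"
    and C1 C\<psi> :: real
  assumes \<Omega>_compact: "compact \<Omega>"
    and \<Omega>_convex: "convex \<Omega>"
    and \<Omega>_lipschitz: "interior \<Omega> \<noteq> {}"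
    and \<mu>_prob: "prob_space \<mu>"
    and \<mu>_sets: "sets \<mu> = sets (restrict_space borel \<Omega>)"
    and C1_pos: "C1 > 0"
    and \<mu>_lower: "\<And>x \<alpha>. x \<in> \<Omega> \<Longrightarrow> 0 < \<alpha> \<Longrightarrow> \<alpha> \<le> 1 \<Longrightarrow>
                   measure \<mu> (\<Omega> \<inter> ball x \<alpha>) \<ge> C1 * measure lborel (ball x \<alpha>)"
    and \<mu>s_finite: "finite_measure \<mu>s"
    and \<mu>s_sets: "sets \<mu>s = sets borel"
    and \<mu>s_ext: "\<And>A. A \<in> sets \<mu> \<Longrightarrow> emeasure \<mu>s A = emeasure \<mu> A"
    and \<mu>s_fourier: "integrable lborel (fourier_measure \<mu>s)"
    and \<psi>_cont: "continuous_on UNIV \<psi>"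
    and \<psi>_nonneg: "\<And>x. \<psi> x \<ge> 0"
    and \<psi>_int: "integrable lborel \<psi>"
    and \<psi>_int1: "integral\<^sup>L lborel \<psi> = 1"
    and \<psi>_moment: "integrable lborel (\<lambda>x. norm x * \<psi> x)"
    and C\<psi>_pos: "C\<psi> > 0"
    and \<psi>_lower: "\<And>x. norm x \<le> 1 \<Longrightarrow> \<psi> x \<ge> C\<psi>"
  shows "\<exists>C>0. \<forall>x\<in>\<Omega>. \<forall>h. 0 < h \<and> h < 1 \<longrightarrow> (\<forall>j\<in>{0, 1::nat}.
           (\<integral>\<^sup>+ t. ennreal (norm ((1 / h) *\<^sub>R (x - t)) ^ j * kernel_scale \<psi> h (x - t)) \<partial>\<mu>)
             \<le> ennreal C)"
proof -
  define Kr where "Kr = (1/(2*pi))^DIM('a) * (\<integral>\<xi>. norm (fourier_measure \<mu>s \<xi>) \<partial>lborel)"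
  have Kr: "Kr \<ge> 0" unfolding Kr_def by (intro mult_nonneg_nonneg Bochner_Integration.integral_nonneg) auto
  define M1 where "M1 = (\<integral>w. norm w * \<psi> w \<partial>lborel)"
  have M1: "M1 \<ge> 0" unfolding M1_def using \<psi>_nonneg by (intro Bochner_Integration.integral_nonneg) auto
  define C where "C = Kr * (1 + M1) + 1"
  have Cpos: "C > 0" unfolding C_def using Kr M1 by (simp add: add_nonneg_pos)
  have \<psi>m[measurable]: "\<psi> \<in> borel_measurable borel"
    by (rule borel_measurable_continuous_onI[OF \<psi>_cont])
  have \<Omega>b: "\<Omega> \<in> sets borel"
    using \<Omega>_compact by (simp add: compact_imp_closed)
  have \<mu>eq: "\<mu> = restrict_space \<mu>s \<Omega>"
  proof (rule measure_eqI)
    show "sets \<mu> = sets (restrict_space \<mu>s \<Omega>)"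
      unfolding \<mu>_sets by (rule sets_restrict_space_cong[symmetric, OF \<mu>s_sets])
    fix A assume A: "A \<in> sets \<mu>"
    have "space \<mu> = \<Omega>"
      using sets_eq_imp_space_eq[OF \<mu>_sets] by (simp add: space_restrict_space)
    then have "A \<subseteq> \<Omega>" using sets.sets_into_space[OF A] by simp
    moreover have "\<Omega> \<inter> space \<mu>s \<in> sets \<mu>s"
      using \<Omega>b \<mu>s_sets sets_eq_imp_space_eq[OF \<mu>s_sets] by simp
    ultimately have "emeasure (restrict_space \<mu>s \<Omega>) A = emeasure \<mu>s A"
      by (intro emeasure_restrict_space) auto
    then show "emeasure \<mu> A = emeasure (restrict_space \<mu>s \<Omega>) A"
      using \<mu>s_ext[OF A] by simp
  qed
  have int_psi: "(\<integral>\<^sup>+w. ennreal (\<psi> w) \<partial>lborel) = 1"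
    using \<psi>_int \<psi>_nonneg \<psi>_int1 by (subst nn_integral_eq_integral) auto
  have int_mom: "(\<integral>\<^sup>+w. ennreal (norm w * \<psi> w) \<partial>lborel) = ennreal M1"
    unfolding M1_def using \<psi>_moment \<psi>_nonneg by (subst nn_integral_eq_integral) auto
  show ?thesis
  proof (intro exI[of _ C] conjI Cpos ballI allI impI)
    fix x :: 'a and h :: real and j :: nat assume x: "x \<in> \<Omega>" and h: "0 < h \<and> h < 1" and j: "j \<in> {0, 1::nat}"
    have h0: "h > 0" using h by simp
    define F where "F t = norm ((1 / h) *\<^sub>R (x - t)) ^ j * kernel_scale \<psi> h (x - t)" for t
    have Fn: "0 \<le> F t" for t
      unfolding F_def kernel_scale_def using \<psi>_nonneg h0 by simp
    have Fc: "continuous_on UNIV F"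
      unfolding F_def kernel_scale_def
      by (intro continuous_intros continuous_on_compose2[OF \<psi>_cont]) auto
    have Fm[measurable]: "F \<in> borel_measurable borel"
      by (rule borel_measurable_continuous_onI[OF Fc])
    have "(\<integral>\<^sup>+t. ennreal (F t) \<partial>\<mu>) = (\<integral>\<^sup>+t. ennreal (F t) * indicator \<Omega> t \<partial>\<mu>s)"
      unfolding \<mu>eq
      by (rule nn_integral_restrict_space)
         (use \<Omega>b \<mu>s_sets sets_eq_imp_space_eq[OF \<mu>s_sets] in simp)
    also have "\<dots> \<le> (\<integral>\<^sup>+t. ennreal (F t) \<partial>\<mu>s)"
      by (intro nn_integral_mono) (auto simp: indicator_def)
    also have "\<dots> \<le> ennreal Kr * (\<integral>\<^sup>+t. ennreal (F t) \<partial>lborel)"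
      unfolding Kr_def by (rule main_ineq[OF \<mu>s_finite \<mu>s_sets \<mu>s_fourier Fc Fn])
    also have "(\<integral>\<^sup>+t. ennreal (F t) \<partial>lborel) = (\<integral>\<^sup>+w. ennreal (norm w ^ j * \<psi> w) \<partial>lborel)"
    proof -
      have "(\<integral>\<^sup>+t. ennreal (F t) \<partial>lborel)
          = ennreal (\<bar>- h\<bar>^DIM('a)) * (\<integral>\<^sup>+w. ennreal (F (x + (- h) *\<^sub>R w)) \<partial>lborel)"
        using h0 by (intro nn_integral_affine_euclid) auto
      also have "\<dots> = (\<integral>\<^sup>+w. ennreal (h^DIM('a)) * ennreal (F (x + (- h) *\<^sub>R w)) \<partial>lborel)"
        using h0 by (subst nn_integral_cmult) auto
      also have "\<dots> = (\<integral>\<^sup>+w. ennreal (norm w ^ j * \<psi> w) \<partial>lborel)"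
      proof (intro nn_integral_cong)
        fix w :: 'a
        have e1: "(1 / h) *\<^sub>R (x - (x + (- h) *\<^sub>R w)) = w" using h0 by simp
        have "h^DIM('a) * F (x + (- h) *\<^sub>R w) = norm w ^ j * \<psi> w"
          unfolding F_def kernel_scale_def e1 using h0
          by (simp add: power_one_over field_simps)
        then show "ennreal (h^DIM('a)) * ennreal (F (x + (- h) *\<^sub>R w)) = ennreal (norm w ^ j * \<psi> w)"
          using h0 Fn by (simp add: ennreal_mult'[symmetric])
      qed
      finally show ?thesis .
    qed
    also have "(\<integral>\<^sup>+w. ennreal (norm w ^ j * \<psi> w) \<partial>lborel) \<le> ennreal (1 + M1)"
    proof -
      have "(\<integral>\<^sup>+w. ennreal (norm w ^ j * \<psi> w) \<partial>lborel) = (if j = 0 then 1 else ennreal M1)"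
        using j int_psi int_mom by auto
      then show ?thesis using M1 by (auto intro: ennreal_leI)
    qed
    also have "ennreal Kr * ennreal (1 + M1) \<le> ennreal C"
    proof -
      have "ennreal Kr * ennreal (1 + M1) = ennreal (Kr * (1 + M1))"
        using Kr M1 by (intro ennreal_mult[symmetric]) auto
      also have "\<dots> \<le> ennreal C" unfolding C_def by (intro ennreal_leI) simp
      finally show ?thesis .
    qed
    finally show "(\<integral>\<^sup>+ t. ennreal (norm ((1 / h) *\<^sub>R (x - t)) ^ j * kernel_scale \<psi> h (x - t)) \<partial>\<mu>) \<le> ennreal C"
      unfolding F_def by (simp add: mult_left_mono)
  qed
qed

end
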